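(* Let $\varphi$ and $\omega$ be Schwarz-type functions and $F=\ell\circ\omega$. Suppose that at some point $\zeta$ of the unit circle, $\varphi$ has a radial limit of modulus one. If $T_{F,\varphi}(f)\in\mathcal{P}$ for every $f\in\mathcal{P}$, then $\omega$ does not have a finite non-zero angular derivative at $\zeta$.
   Context: $\mathbb{D}$ is the open unit disk. $\mathcal{P}$ is the set of analytic $f$ on $\mathbb{D}$ with $\mathrm{Re}\,f>0$ and $f(0)=1$. A Schwarz-type function is an analytic $\varphi:\mathbb{D}\to\mathbb{D}$ with $\varphi(0)=0$. $\ell(z)=\frac{1+z}{1-z}$. $T_{F,\varphi}(f)=F\cdot(f\circ\varphi)$. An analytic self-map $\omega$ of $\mathbb{D}$ has an angular derivative at $\zeta$ (in the sense of Carathéodory) if its nontangential limit at $\zeta$ has modulus one and $\omega'(z)$ has a finite nontangential limit as $z\to\zeta$. *)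

theory Defs
  imports "HOL-Complex_Analysis.Complex_Analysis"
begin

definition unit_disk :: "complex set" where
  "unit_disk = ball 0 1"

definition class_P :: "(complex \<Rightarrow> complex) set" where
  "class_P = {f. f holomorphic_on unit_disk \<and> (\<forall>z\<in>unit_disk. Re (f z) > 0) \<and> f 0 = 1}"

definition schwarz_type :: "(complex \<Rightarrow> complex) \<Rightarrow> bool" where
  "schwarz_type \<phi> \<longleftrightarrow> \<phi> holomorphic_on unit_disk \<and> \<phi> ` unit_disk \<subseteq> unit_disk \<and> \<phi> 0 = 0"

definition ell :: "complex \<Rightarrow> complex" where
  "ell z = (1 + z) / (1 - z)"

definition T_op :: "(complex \<Rightarrow> complex) \<Rightarrow> (complex \<Rightarrow> complex) \<Rightarrow> (complex \<Rightarrow> complex) \<Rightarrow> (complex \<Rightarrow> complex)" where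
  "T_op F \<phi> f = (\<lambda>z. F z * f (\<phi> z))"

definition stolz_angle :: "complex \<Rightarrow> real \<Rightarrow> complex set" where
  "stolz_angle \<zeta> M = {z \<in> unit_disk. cmod (\<zeta> - z) < M * (1 - cmod z)}"

definition nontangential_limit :: "(complex \<Rightarrow> complex) \<Rightarrow> complex \<Rightarrow> complex \<Rightarrow> bool" where
  "nontangential_limit f \<zeta> L \<longleftrightarrow> (\<forall>M>1. (f \<longlongrightarrow> L) (at \<zeta> within stolz_angle \<zeta> M))"

definition radial_limit :: "(complex \<Rightarrow> complex) \<Rightarrow> complex \<Rightarrow> complex \<Rightarrow> bool" where
  "radial_limit f \<zeta> L \<longleftrightarrow> ((\<lambda>r::real. f (complex_of_real r * \<zeta>)) \<longlongrightarrow> L) (at_left 1)"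

definition has_angular_derivative :: "(complex \<Rightarrow> complex) \<Rightarrow> complex \<Rightarrow> complex \<Rightarrow> bool" where
  "has_angular_derivative \<omega> \<zeta> D \<longleftrightarrow>
     (\<exists>\<eta>. cmod \<eta> = 1 \<and> nontangential_limit \<omega> \<zeta> \<eta>) \<and> nontangential_limit (deriv \<omega>) \<zeta> D"

end

theory Submission
  imports Defs
begin

lemma schwarz_pick:
  assumes holf: "f holomorphic_on ball 0 1" and img: "f ` ball 0 1 \<subseteq> ball 0 1"
    and z: "norm z < 1" and w: "norm w < 1"
  shows "norm (Moebius_function 0 (f w) (f z)) \<le> norm (Moebius_function 0 w z)"
proof -
  have fw: "norm (f w) < 1" using img w by (simp add: image_subset_iff)
  define g where "g = Moebius_function 0 (f w) \<circ> f \<circ> Moebius_function 0 (-w)"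
  have mimg: "Moebius_function 0 (-w) ` ball 0 1 \<subseteq> ball 0 1"
    using Moebius_function_norm_lt_1 w by auto
  have h1: "(f \<circ> Moebius_function 0 (-w)) holomorphic_on ball 0 1"
    by (rule holomorphic_on_compose_gen[OF Moebius_function_holomorphic holf mimg]) (use w in auto)
  have i1: "(f \<circ> Moebius_function 0 (-w)) ` ball 0 1 \<subseteq> ball 0 1"
    using mimg img unfolding image_comp[symmetric] by (meson image_mono order_trans)
  have hol: "g holomorphic_on ball 0 1"
    unfolding g_def o_assoc[symmetric]
    by (rule holomorphic_on_compose_gen[OF h1 Moebius_function_holomorphic[OF fw] i1])
  have g0: "g 0 = 0"
    by (simp add: g_def Moebius_function_of_zero Moebius_function_eq_zero)
  have gn: "norm (g u) < 1" if "norm u < 1" for u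
  proof -
    have "norm (Moebius_function 0 (-w) u) < 1" using Moebius_function_norm_lt_1 w that by simp
    then have "norm (f (Moebius_function 0 (-w) u)) < 1" using img by (simp add: image_subset_iff)
    then show ?thesis unfolding g_def using Moebius_function_norm_lt_1 fw by simp
  qed
  have v: "norm (Moebius_function 0 w z) < 1" using Moebius_function_norm_lt_1 w z by simp
  have "norm (g (Moebius_function 0 w z)) \<le> norm (Moebius_function 0 w z)"
    using Schwarz_Lemma(1)[OF hol g0 gn v] by simp
  moreover have "Moebius_function 0 (-w) (Moebius_function 0 w z) = z"
    using Moebius_function_compose[of "-w" w z] w z by simp
  ultimately show ?thesis by (simp add: g_def)
qed

lemma ell_num: "(1+a) * cnj (1-a) = complex_of_real (1 - (cmod a)^2) + \<i> * complex_of_real (2 * Im a)"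
  using cmod_power2[of a] by (simp add: complex_eq_iff algebra_simps power2_eq_square)

lemma ell_eq:
  assumes "cmod a < 1"
  shows "ell a = ((1+a) * cnj (1-a)) / complex_of_real ((cmod (1-a))^2)"
proof -
  have "1 - a \<noteq> 0" using assms by auto
  moreover have "(1-a) * cnj (1-a) = complex_of_real ((cmod (1-a))^2)"
    using complex_norm_square mult.commute by metis
  ultimately show ?thesis unfolding ell_def
    by (metis (no_types, lifting) complex_cnj_zero_iff mult_divide_mult_cancel_right no_zero_divisors)
qed

lemma Re_ell_mult:
  assumes "cmod a < 1" "cmod u < 1"
  shows "Re (ell a * ell u) = ((1 - (cmod a)^2) * (1 - (cmod u)^2) - 4 * Im a * Im u)
            / ((cmod (1-a))^2 * (cmod (1-u))^2)"
proof -
  have "ell a * ell u = ((complex_of_real (1 - (cmod a)^2) + \<i> * complex_of_real (2 * Im a)) *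
        (complex_of_real (1 - (cmod u)^2) + \<i> * complex_of_real (2 * Im u))) /
        complex_of_real ((cmod (1-a))^2 * (cmod (1-u))^2)"
    using ell_eq[OF assms(1)] ell_eq[OF assms(2)] ell_num[of a] ell_num[of u] by simp
  then show ?thesis by (simp add: Re_divide_of_real algebra_simps)
qed

lemma Re_ell_pos:
  assumes "cmod u < 1"
  shows "Re (ell u) > 0"
proof -
  have "Re (ell u * ell 0) > 0"
    using Re_ell_mult[OF assms, of 0] assms
    by (auto intro!: divide_pos_pos simp: abs_square_less_1)
  then show ?thesis by (simp add: ell_def)
qed

lemma ell_rot_in_P:
  assumes "cmod l = 1"
  shows "(\<lambda>w. ell (l * w)) \<in> class_P"
proof -
  have nz: "1 - l * w \<noteq> 0" if "w \<in> unit_disk" for w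
  proof -
    have "cmod (l * w) < 1" using that assms by (simp add: unit_disk_def norm_mult)
    then show ?thesis by auto
  qed
  have "(\<lambda>w. ell (l * w)) holomorphic_on unit_disk"
    unfolding ell_def using nz by (intro holomorphic_intros) auto
  moreover have "Re (ell (l * w)) > 0" if "w \<in> unit_disk" for w
    using that assms by (intro Re_ell_pos) (simp add: unit_disk_def norm_mult)
  ultimately show ?thesis by (simp add: class_P_def ell_def)
qed

lemma pointwise:
  assumes phi: "schwarz_type \<phi>" and om: "schwarz_type \<omega>"
    and T: "\<forall>f\<in>class_P. T_op (ell \<circ> \<omega>) \<phi> f \<in> class_P"
    and z: "z \<in> unit_disk"
  shows "4 * \<bar>Im (\<omega> z)\<bar> * cmod (\<phi> z) \<le> (1 - (cmod (\<omega> z))^2) * (1 - (cmod (\<phi> z))^2)"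
proof -
  define p where "p = \<phi> z"
  define a where "a = \<omega> z"
  have pa: "cmod p < 1" "cmod a < 1"
    using phi om z unfolding p_def a_def schwarz_type_def unit_disk_def by (auto simp: image_subset_iff)
  have a2: "(cmod a)^2 < 1" using pa by (simp add: abs_square_less_1)
  have p2: "(cmod p)^2 < 1" using pa by (simp add: abs_square_less_1)
  show ?thesis
  proof (cases "p = 0")
    case True
    then show ?thesis using a2 by (simp add: p_def a_def)
  next
    case False
    define \<sigma> :: real where "\<sigma> = (if Im a \<ge> 0 then 1 else -1)"
    define l where "l = \<i> * complex_of_real \<sigma> * cnj p / complex_of_real (cmod p)"
    have l1: "cmod l = 1" using False by (simp add: l_def norm_mult norm_divide \<sigma>_def)
    have lp: "l * p = \<i> * complex_of_real (\<sigma> * cmod p)"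
    proof -
      have "cnj p * p = complex_of_real ((cmod p)^2)"
        by (metis complex_norm_square mult.commute complex_cnj_mult complex_cnj_cnj)
      then show ?thesis using False unfolding l_def
        by (simp add: power2_eq_square field_simps)
    qed
    have u1: "cmod (l * p) < 1" using pa l1 by (simp add: norm_mult)
    have "T_op (ell \<circ> \<omega>) \<phi> (\<lambda>w. ell (l * w)) \<in> class_P"
      using T ell_rot_in_P[OF l1] by blast
    then have "Re (ell a * ell (l * p)) > 0"
      using z unfolding class_P_def T_op_def a_def p_def by auto
    then have "((1 - (cmod a)^2) * (1 - (cmod (l*p))^2) - 4 * Im a * Im (l*p))
            / ((cmod (1-a))^2 * (cmod (1-(l*p)))^2) > 0"
      using Re_ell_mult[OF pa(2) u1] by simp
    then have "(1 - (cmod a)^2) * (1 - (cmod (l*p))^2) - 4 * Im a * Im (l*p) > 0"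
      by (smt (verit) divide_nonpos_nonneg zero_le_mult_iff zero_le_power2)
    moreover have "cmod (l*p) = cmod p" using l1 by (simp add: norm_mult)
    moreover have "Im a * Im (l*p) = \<bar>Im a\<bar> * cmod p"
      using lp by (simp add: \<sigma>_def)
    ultimately show ?thesis by (simp add: a_def p_def)
  qed
qed

definition ppt :: "complex \<Rightarrow> real \<Rightarrow> real \<Rightarrow> complex" where
  "ppt \<zeta> e s = \<zeta> * (1 - complex_of_real s * Complex 1 e)"

lemma sqrt2_lt: "sqrt 2 < 3/2"
  by (rule real_less_lsqrt) (auto simp: power2_eq_square)

lemma ppt_facts:
  assumes z1: "cmod \<zeta> = 1" and e: "\<bar>e\<bar> = 1" and s: "0 < s" "s < 1/4"
  shows "ppt \<zeta> e s \<in> stolz_angle \<zeta> 3" "cmod (\<zeta> - ppt \<zeta> e s) = s * sqrt 2"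
    "ppt \<zeta> e s \<noteq> \<zeta>"
proof -
  have e2: "e^2 = 1" using e by (simp add: abs_square_eq_1)
  have "1 - complex_of_real s * Complex 1 e = Complex (1-s) (-s*e)"
    by (simp add: complex_eq_iff)
  then have n1: "cmod (ppt \<zeta> e s) = sqrt ((1-s)^2 + s^2)"
    using z1 e2 by (simp add: ppt_def norm_mult complex_norm power_mult_distrib)
  have "\<zeta> - ppt \<zeta> e s = \<zeta> * (complex_of_real s * Complex 1 e)"
    by (simp add: ppt_def algebra_simps)
  then have n2: "cmod (\<zeta> - ppt \<zeta> e s) = s * sqrt 2"
    using z1 e2 s by (simp add: norm_mult complex_norm)
  then show "cmod (\<zeta> - ppt \<zeta> e s) = s * sqrt 2" .
  have q: "sqrt ((1-s)^2 + s^2) \<le> 1 - s + s^2"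
  proof (rule real_le_lsqrt)
    show "0 \<le> 1 - s + s^2" using s by (simp add: power2_eq_square)
    have "0 \<le> s^2 * (1-s)^2" by simp
    then show "(1-s)^2 + s^2 \<le> (1 - s + s^2)^2" by (simp add: power2_eq_square algebra_simps)
  qed
  have "s * sqrt 2 < s * (3/2)" using sqrt2_lt s by simp
  also have "\<dots> < 3 * (1 - (1 - s + s^2))"
  proof -
    have "s * s < s * (1 / 4)" using s by (intro mult_strict_left_mono) auto
    moreover have "3 * (1 - (1 - s + s^2)) = 3 * s - 3 * (s * s)" by (simp add: power2_eq_square algebra_simps)
    ultimately show ?thesis using s by linarith
  qed
  also have "\<dots> \<le> 3 * (1 - cmod (ppt \<zeta> e s))" using q n1 by simp
  finally have st: "cmod (\<zeta> - ppt \<zeta> e s) < 3 * (1 - cmod (ppt \<zeta> e s))" using n2 by simp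
  moreover have "cmod (ppt \<zeta> e s) < 1"
    using st by (smt (verit) norm_ge_zero)
  ultimately show "ppt \<zeta> e s \<in> stolz_angle \<zeta> 3"
    by (simp add: stolz_angle_def unit_disk_def)
  show "ppt \<zeta> e s \<noteq> \<zeta>" using n2 s by auto
qed

lemma ppt_hyp:
  assumes z1: "cmod \<zeta> = 1" and e: "\<bar>e\<bar> = 1" and s: "0 < s" "s < 1/4"
  shows "cmod (Moebius_function 0 (complex_of_real (1-s) * \<zeta>) (ppt \<zeta> e s)) \<le> 4/7"
proof -
  have cz: "cnj \<zeta> * \<zeta> = 1"
    using z1 complex_norm_square[of \<zeta>] by (simp add: mult.commute)
  have num: "ppt \<zeta> e s - complex_of_real (1-s) * \<zeta> = \<zeta> * complex_of_real s * (- \<i> * complex_of_real e)"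
    by (simp add: ppt_def complex_eq_iff algebra_simps)
  have "cnj (complex_of_real (1-s) * \<zeta>) * ppt \<zeta> e s
      = complex_of_real (1-s) * (cnj \<zeta> * \<zeta>) * (1 - complex_of_real s * Complex 1 e)"
    by (simp add: ppt_def)
  also have "\<dots> = complex_of_real (1-s) * (1 - complex_of_real s * Complex 1 e)" using cz by simp
  finally have den: "1 - cnj (complex_of_real (1-s) * \<zeta>) * ppt \<zeta> e s
       = complex_of_real s * Complex (2 - s) (e * (1 - s))"
    by (simp add: complex_eq_iff algebra_simps)
  have nn: "cmod (ppt \<zeta> e s - complex_of_real (1-s) * \<zeta>) = s"
    by (subst num) (use z1 e s in \<open>simp add: norm_mult\<close>)
  have "s * (7/4) \<le> s * \<bar>Re (Complex (2 - s) (e * (1 - s)))\<bar>" using s by simp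
  also have "\<dots> \<le> s * cmod (Complex (2 - s) (e * (1 - s)))"
    using s abs_Re_le_cmod[of "Complex (2 - s) (e * (1 - s))"] by (intro mult_left_mono) auto
  also have "s * cmod (Complex (2 - s) (e * (1 - s))) = cmod (1 - cnj (complex_of_real (1-s) * \<zeta>) * ppt \<zeta> e s)"
    by (subst den) (use s in \<open>simp add: norm_mult\<close>)
  finally have dd: "s * (7/4) \<le> cmod (1 - cnj (complex_of_real (1-s) * \<zeta>) * ppt \<zeta> e s)" .
  define w where "w = complex_of_real (1-s) * \<zeta>"
  have "cmod (Moebius_function 0 (complex_of_real (1-s) * \<zeta>) (ppt \<zeta> e s))
      = cmod ((ppt \<zeta> e s - w) / (1 - cnj w * ppt \<zeta> e s))"
    unfolding w_def Moebius_function_simple ..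
  also have "\<dots> = s / cmod (1 - cnj (complex_of_real (1-s) * \<zeta>) * ppt \<zeta> e s)"
    unfolding norm_divide using nn by (simp only: w_def)
  also have "\<dots> \<le> s / (s * (7/4))"
  proof -
    have "0 < cmod (1 - cnj (complex_of_real (1-s) * \<zeta>) * ppt \<zeta> e s)" using dd s by linarith
    then show ?thesis using dd s by (intro divide_left_mono) auto
  qed
  also have "\<dots> = 4/7" using s by simp
  finally show ?thesis .
qed

lemma ev_small: "eventually (\<lambda>s. 0 < s \<and> s < (1/4::real)) (at_right 0)"
  using eventually_at_right_field zero_less_divide_1_iff zero_less_numeral by blast

lemma ppt_tendsto: "(ppt \<zeta> e \<longlongrightarrow> \<zeta>) (at_right 0)"
proof -
  have "(ppt \<zeta> e \<longlongrightarrow> \<zeta> * (1 - complex_of_real 0 * Complex 1 e)) (at_right 0)"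
    unfolding ppt_def by (intro tendsto_intros)
  then show ?thesis by simp
qed

lemma ppt_filterlim:
  assumes "cmod \<zeta> = 1" "\<bar>e\<bar> = 1"
  shows "filterlim (ppt \<zeta> e) (at \<zeta> within stolz_angle \<zeta> 3) (at_right 0)"
  unfolding filterlim_at
proof
  show "\<forall>\<^sub>F x in at_right 0. ppt \<zeta> e x \<in> stolz_angle \<zeta> 3 \<and> ppt \<zeta> e x \<noteq> \<zeta>"
    using ev_small by eventually_elim (use ppt_facts assms in auto)
qed (rule ppt_tendsto)

lemma radial_comp:
  assumes "radial_limit f \<zeta> L"
  shows "((\<lambda>s. f (complex_of_real (1-s) * \<zeta>)) \<longlongrightarrow> L) (at_right 0)"
proof -
  have "filterlim (\<lambda>s::real. 1 - s) (at_left 1) (at_right 0)"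
    unfolding filterlim_at
  proof
    show "\<forall>\<^sub>F x in at_right 0. 1 - x \<in> {..<1::real} \<and> 1 - x \<noteq> 1"
      using ev_small by eventually_elim auto
    have "((\<lambda>s::real. 1 - s) \<longlongrightarrow> 1 - 0) (at_right 0)" by (intro tendsto_intros)
    then show "((\<lambda>s::real. 1 - s) \<longlongrightarrow> 1) (at_right 0)" by simp
  qed
  then show ?thesis
    using assms unfolding radial_limit_def by (rule filterlim_compose[rotated])
qed

lemma stolz_sub: "stolz_angle \<zeta> M \<subseteq> unit_disk"
  by (auto simp: stolz_angle_def)

lemma ppt_affine:
  "(1 - u) *\<^sub>R ppt \<zeta> e a + u *\<^sub>R ppt \<zeta> e b = ppt \<zeta> e ((1-u)*a + u*b)"
  by (simp add: ppt_def scaleR_conv_of_real algebra_simps)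


lemma seg_param:
  assumes "z \<in> closed_segment (ppt \<zeta> e a) (ppt \<zeta> e b)" "a \<le> b"
  shows "\<exists>t. a \<le> t \<and> t \<le> b \<and> z = ppt \<zeta> e t"
proof -
  obtain u where u: "0 \<le> u" "u \<le> 1" "z = (1 - u) *\<^sub>R ppt \<zeta> e a + u *\<^sub>R ppt \<zeta> e b"
    using assms(1) unfolding in_segment by blast
  have l: "(1-u)*a + u*a \<le> (1-u)*a + u*b" using u assms(2) by (intro add_left_mono mult_left_mono) auto
  have r: "(1-u)*a + u*b \<le> (1-u)*b + u*b" using u assms(2) by (intro add_right_mono mult_left_mono) auto
  have "(1-u)*a + u*a = a" "(1-u)*b + u*b = b" by (simp_all add: algebra_simps)
  moreover have "z = ppt \<zeta> e ((1-u)*a + u*b)" using u(3) ppt_affine[of u \<zeta> e a b] by simp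
  ultimately show ?thesis using l r by (intro exI[of _ "(1-u)*a + u*b"]) simp
qed

lemma seg_bound:
  assumes hol: "\<omega> holomorphic_on unit_disk"
    and pts: "\<And>t. a \<le> t \<Longrightarrow> t \<le> b \<Longrightarrow> ppt \<zeta> e t \<in> unit_disk \<and> cmod (deriv \<omega> (ppt \<zeta> e t) - D) \<le> B"
    and ab: "a \<le> b"
  shows "cmod ((\<omega> (ppt \<zeta> e b) - D * ppt \<zeta> e b) - (\<omega> (ppt \<zeta> e a) - D * ppt \<zeta> e a))
           \<le> B * cmod (ppt \<zeta> e b - ppt \<zeta> e a)"
proof (rule field_differentiable_bound[where S="closed_segment (ppt \<zeta> e a) (ppt \<zeta> e b)"
          and f' = "\<lambda>z. deriv \<omega> z - D" and f = "\<lambda>z. \<omega> z - D * z"])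
  show "convex (closed_segment (ppt \<zeta> e a) (ppt \<zeta> e b))" by (rule convex_closed_segment)
  fix z assume z: "z \<in> closed_segment (ppt \<zeta> e a) (ppt \<zeta> e b)"
  obtain t where t: "a \<le> t" "t \<le> b" "z = ppt \<zeta> e t" using seg_param[OF z ab] by blast
  have zd: "z \<in> unit_disk" "cmod (deriv \<omega> z - D) \<le> B" using pts[OF t(1) t(2)] t(3) by auto
  then show "cmod (deriv \<omega> z - D) \<le> B" by simp
  have "(\<omega> has_field_derivative deriv \<omega> z) (at z within closed_segment (ppt \<zeta> e a) (ppt \<zeta> e b))"
    using hol zd(1) by (intro holomorphic_derivI) (auto simp: unit_disk_def)
  moreover have "((\<lambda>z. D * z) has_field_derivative D) (at z within closed_segment (ppt \<zeta> e a) (ppt \<zeta> e b))"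
    by (rule DERIV_cmult_Id)
  ultimately show "((\<lambda>z. \<omega> z - D * z) has_field_derivative deriv \<omega> z - D) (at z within closed_segment (ppt \<zeta> e a) (ppt \<zeta> e b))"
    by (rule DERIV_diff)
next
  show "ppt \<zeta> e b \<in> closed_segment (ppt \<zeta> e a) (ppt \<zeta> e b)" by (rule ends_in_segment)
  show "ppt \<zeta> e a \<in> closed_segment (ppt \<zeta> e a) (ppt \<zeta> e b)" by (rule ends_in_segment)
qed

lemma expansion:
  assumes hol: "\<omega> holomorphic_on unit_disk" and z1: "cmod \<zeta> = 1" and e: "\<bar>e\<bar> = 1"
    and lim: "nontangential_limit \<omega> \<zeta> \<eta>" and dlim: "nontangential_limit (deriv \<omega>) \<zeta> D"
    and eps: "\<epsilon> > 0"
  shows "eventually (\<lambda>s. cmod (\<omega> (ppt \<zeta> e s) - \<eta> + D * \<zeta> * Complex 1 e * complex_of_real s) \<le> \<epsilon> * s) (at_right 0)"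
proof -
  define S where "S = stolz_angle \<zeta> 3"
  have "((deriv \<omega>) \<longlongrightarrow> D) (at \<zeta> within S)" using dlim unfolding nontangential_limit_def S_def by simp
  from tendstoD[OF this, of "\<epsilon>/2"] eps
  obtain \<delta> where d0: "\<delta> > 0" and dd: "\<And>x. x \<in> S \<Longrightarrow> 0 < dist x \<zeta> \<Longrightarrow> dist x \<zeta> < \<delta> \<Longrightarrow> dist (deriv \<omega> x) D < \<epsilon>/2"
    unfolding eventually_at by auto
  have wlim: "((\<lambda>s. \<omega> (ppt \<zeta> e s)) \<longlongrightarrow> \<eta>) (at_right 0)"
  proof -
    have "(\<omega> \<longlongrightarrow> \<eta>) (at \<zeta> within S)" using lim unfolding nontangential_limit_def S_def by simp
    then show ?thesis using ppt_filterlim[OF z1 e] unfolding S_def by (rule filterlim_compose)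
  qed
  have pin: "ppt \<zeta> e t \<in> S" "dist (ppt \<zeta> e t) \<zeta> = t * sqrt 2" "ppt \<zeta> e t \<noteq> \<zeta>"
    if "0 < t" "t < 1/4" for t
    using ppt_facts[OF z1 e that] by (auto simp: S_def dist_norm norm_minus_commute)
  define b where "b = min (1/4) (\<delta>/2)"
  have b0: "b > 0" using d0 by (simp add: b_def)
  have main: "cmod (\<omega> (ppt \<zeta> e s) - \<eta> + D * \<zeta> * Complex 1 e * complex_of_real s) \<le> \<epsilon> * s"
    if s: "0 < s" "s < b" for s
  proof -
    define h where "h = (\<lambda>z. \<omega> z - D * z)"
    have bnd: "cmod (h (ppt \<zeta> e s) - h (ppt \<zeta> e s')) \<le> \<epsilon>/2 * cmod (ppt \<zeta> e s - ppt \<zeta> e s')"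
      if s': "0 < s'" "s' < s" for s'
    proof -
      have "ppt \<zeta> e t \<in> unit_disk \<and> cmod (deriv \<omega> (ppt \<zeta> e t) - D) \<le> \<epsilon>/2"
        if t: "s' \<le> t" "t \<le> s" for t
      proof -
        have t4: "0 < t" "t < 1/4" "t < \<delta>/2" using t s s' by (auto simp: b_def)
        have "t * sqrt 2 < t * 2" using t4 sqrt2_lt by simp
        moreover have "dist (ppt \<zeta> e t) \<zeta> = t * sqrt 2" using pin(2)[OF t4(1) t4(2)] by simp
        moreover have "0 < t * sqrt 2" using t4(1) by simp
        moreover have zS: "ppt \<zeta> e t \<in> S" using pin(1)[OF t4(1) t4(2)] by simp
        ultimately have "dist (deriv \<omega> (ppt \<zeta> e t)) D < \<epsilon>/2" using dd[of "ppt \<zeta> e t"] t4(3) by simp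
        moreover have "ppt \<zeta> e t \<in> unit_disk" using zS stolz_sub unfolding S_def by blast
        ultimately show ?thesis by (simp add: dist_norm)
      qed
      then show ?thesis unfolding h_def using seg_bound[OF hol, of s' s \<zeta> e D "\<epsilon>/2"] s' by simp
    qed
    have hlim: "((\<lambda>s'. h (ppt \<zeta> e s')) \<longlongrightarrow> \<eta> - D * \<zeta>) (at_right 0)"
      unfolding h_def by (intro tendsto_intros wlim ppt_tendsto)
    have lim1: "((\<lambda>s'. cmod (h (ppt \<zeta> e s) - h (ppt \<zeta> e s')) - \<epsilon>/2 * cmod (ppt \<zeta> e s - ppt \<zeta> e s'))
        \<longlongrightarrow> cmod (h (ppt \<zeta> e s) - (\<eta> - D * \<zeta>)) - \<epsilon>/2 * cmod (ppt \<zeta> e s - \<zeta>)) (at_right 0)"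
      by (intro tendsto_intros hlim ppt_tendsto)
    have ev: "eventually (\<lambda>s'. cmod (h (ppt \<zeta> e s) - h (ppt \<zeta> e s')) - \<epsilon>/2 * cmod (ppt \<zeta> e s - ppt \<zeta> e s') \<le> 0) (at_right 0)"
      unfolding eventually_at_right_field[of _ "0::real"]
      using s bnd by (intro exI[of _ s]) auto
    have "cmod (h (ppt \<zeta> e s) - (\<eta> - D * \<zeta>)) - \<epsilon>/2 * cmod (ppt \<zeta> e s - \<zeta>) \<le> 0"
      using tendsto_upperbound[OF lim1 ev] by simp
    moreover have "h (ppt \<zeta> e s) - (\<eta> - D * \<zeta>) = \<omega> (ppt \<zeta> e s) - \<eta> + D * \<zeta> * Complex 1 e * complex_of_real s"
      by (simp add: h_def ppt_def algebra_simps)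
    moreover have "cmod (ppt \<zeta> e s - \<zeta>) = s * sqrt 2"
      using pin(2)[of s] s by (simp add: b_def dist_norm)
    moreover have "\<epsilon>/2 * (s * sqrt 2) \<le> \<epsilon> * s"
      using sqrt2_lt eps s by (simp add: mult_left_mono)
    ultimately show ?thesis by simp
  qed
  show ?thesis unfolding eventually_at_right_field[of _ "0::real"]
    using b0 main by blast
qed

lemma choose_dir:
  assumes "a \<noteq> 0"
  shows "\<exists>e::real. \<bar>e\<bar> = 1 \<and> 2 * Re (a * Complex 1 e) < 4 * \<bar>Im (a * Complex 1 e)\<bar>"
proof -
  have key: False if n1: "\<not> 2 * Re (a * Complex 1 1) < 4 * \<bar>Im (a * Complex 1 1)\<bar>"
    and n2: "\<not> 2 * Re (a * Complex 1 (-1)) < 4 * \<bar>Im (a * Complex 1 (-1))\<bar>"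
  proof -
    have h1: "Re a - Im a \<ge> 2 * \<bar>Re a + Im a\<bar>" using n1 by simp
    have h2: "Re a + Im a \<ge> 2 * \<bar>Im a - Re a\<bar>" using n2 by simp
    have "Re a = 0 \<and> Im a = 0"
      using h1 h2 abs_ge_self[of "Re a + Im a"] abs_ge_minus_self[of "Re a + Im a"]
        abs_ge_self[of "Im a - Re a"] abs_ge_minus_self[of "Im a - Re a"]
      by (intro conjI order.antisym; linarith)
    then show False using assms by (simp add: complex_eq_iff)
  qed
  show ?thesis
  proof (cases "2 * Re (a * Complex 1 1) < 4 * \<bar>Im (a * Complex 1 1)\<bar>")
    case True
    then show ?thesis by (intro exI[of _ 1]) simp
  next
    case False
    then have "2 * Re (a * Complex 1 (-1)) < 4 * \<bar>Im (a * Complex 1 (-1))\<bar>" using key by blast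
    then show ?thesis by (intro exI[of _ "-1"]) simp
  qed
qed

lemma alg_step:
  fixes W \<eta> c d E :: complex and r s \<epsilon> :: real
  assumes er: "\<eta> = complex_of_real r" and r2: "r * r = 1"
    and E: "E = W - \<eta> + c * d * complex_of_real s"
    and En: "cmod E \<le> \<epsilon> * s" and s: "0 < s"
    and C: "\<epsilon> * s * 6 = 4 * (s * \<bar>Im (c * \<eta> * d)\<bar>) - 2 * (s * Re (c * \<eta> * d))"
  shows "1 - (cmod W)^2 \<le> 4 * \<bar>Im W\<bar>"
proof -
  define a where "a = c * \<eta>"
  define X where "X = - (a * d * complex_of_real s) + E * \<eta>"
  have ee: "\<eta> * \<eta> = 1" using r2 er by (simp flip: of_real_mult)
  have VX: "W * \<eta> = 1 + X"
  proof -
    have "W * \<eta> = (E + \<eta> - c * d * complex_of_real s) * \<eta>" using E by simp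
    also have "\<dots> = E * \<eta> + \<eta> * \<eta> - c * \<eta> * d * complex_of_real s" by (simp add: algebra_simps)
    finally show ?thesis using ee unfolding X_def a_def by simp
  qed
  have "r^2 = 1" using r2 by (simp add: power2_eq_square)
  then have ra: "\<bar>r\<bar> = 1" unfolding abs_square_eq_1 .
  have eta: "cmod \<eta> = 1" using er ra by simp
  have nV: "cmod (W * \<eta>) = cmod W" using eta by (simp add: norm_mult)
  have iV: "\<bar>Im (W * \<eta>)\<bar> = \<bar>Im W\<bar>" using er ra by (simp add: abs_mult)
  have nE: "cmod (E * \<eta>) \<le> \<epsilon> * s" using En eta by (simp add: norm_mult)
  have reE: "\<bar>Re (E * \<eta>)\<bar> \<le> \<epsilon> * s" using nE abs_Re_le_cmod[of "E * \<eta>"] by linarith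
  have imE: "\<bar>Im (E * \<eta>)\<bar> \<le> \<epsilon> * s" using nE abs_Im_le_cmod[of "E * \<eta>"] by linarith
  have reX: "Re X = - (s * Re (a * d)) + Re (E * \<eta>)" by (simp add: X_def)
  have imX: "Im X = - (s * Im (a * d)) + Im (E * \<eta>)" by (simp add: X_def)
  have "(cmod W)^2 = (1 + Re X)^2 + (Im X)^2"
    using nV VX cmod_power2[of "1 + X"] by simp
  moreover have "(1 + Re X)^2 \<ge> 1 + 2 * Re X" by (simp add: power2_eq_square algebra_simps)
  moreover have "(Im X)^2 \<ge> 0" by simp
  ultimately have "1 - (cmod W)^2 \<le> - 2 * Re X" by linarith
  then have A: "1 - (cmod W)^2 \<le> 2 * (s * Re (a * d)) + 2 * (\<epsilon> * s)" using reX reE by linarith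
  have "\<bar>Im W\<bar> = \<bar>Im (1 + X)\<bar>" using iV VX by simp
  also have "\<dots> = \<bar>- (s * Im (a * d)) + Im (E * \<eta>)\<bar>" using imX by simp
  finally have "\<bar>Im W\<bar> = \<bar>- (s * Im (a * d)) + Im (E * \<eta>)\<bar>" .
  moreover have "\<bar>s * Im (a * d)\<bar> = s * \<bar>Im (a * d)\<bar>" using s by (simp add: abs_mult)
  ultimately have B: "\<bar>Im W\<bar> \<ge> s * \<bar>Im (a * d)\<bar> - \<epsilon> * s" using imE by linarith
  show ?thesis using A B C unfolding a_def by linarith
qed

lemma keyB:
  assumes hol: "\<omega> holomorphic_on unit_disk" and z1: "cmod \<zeta> = 1"
    and eta: "cmod \<eta> = 1" and lim: "nontangential_limit \<omega> \<zeta> \<eta>"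
    and dlim: "nontangential_limit (deriv \<omega>) \<zeta> D" and D0: "D \<noteq> 0"
  shows "\<exists>e. \<bar>e\<bar> = 1 \<and> eventually (\<lambda>s. 1 - (cmod (\<omega> (ppt \<zeta> e s)))^2 \<le> 4 * \<bar>Im (\<omega> (ppt \<zeta> e s))\<bar>) (at_right 0)"
proof (cases "Im \<eta> = 0")
  case False
  have e1: "\<bar>1::real\<bar> = 1" by simp
  have wlim: "((\<lambda>s. \<omega> (ppt \<zeta> 1 s)) \<longlongrightarrow> \<eta>) (at_right 0)"
  proof -
    have "(\<omega> \<longlongrightarrow> \<eta>) (at \<zeta> within stolz_angle \<zeta> 3)" using lim unfolding nontangential_limit_def by simp
    then show ?thesis using ppt_filterlim[OF z1 e1] by (rule filterlim_compose)
  qed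
  define c where "c = \<bar>Im \<eta>\<bar>"
  have c0: "c > 0" using False by (simp add: c_def)
  have "((\<lambda>s. 1 - (cmod (\<omega> (ppt \<zeta> 1 s)))^2) \<longlongrightarrow> 1 - (cmod \<eta>)^2) (at_right 0)"
    by (intro tendsto_intros wlim)
  then have "((\<lambda>s. 1 - (cmod (\<omega> (ppt \<zeta> 1 s)))^2) \<longlongrightarrow> 0) (at_right 0)" using eta by simp
  then have ev1: "eventually (\<lambda>s. 1 - (cmod (\<omega> (ppt \<zeta> 1 s)))^2 < c) (at_right 0)"
    using c0 by (rule order_tendstoD)
  have "((\<lambda>s. \<bar>Im (\<omega> (ppt \<zeta> 1 s))\<bar>) \<longlongrightarrow> c) (at_right 0)"
    unfolding c_def by (intro tendsto_intros wlim)
  then have ev2: "eventually (\<lambda>s. c/2 < \<bar>Im (\<omega> (ppt \<zeta> 1 s))\<bar>) (at_right 0)"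
    using c0 by (intro order_tendstoD) auto
  have "eventually (\<lambda>s. 1 - (cmod (\<omega> (ppt \<zeta> 1 s)))^2 \<le> 4 * \<bar>Im (\<omega> (ppt \<zeta> 1 s))\<bar>) (at_right 0)"
    using ev1 ev2 by eventually_elim linarith
  then show ?thesis using e1 by blast
next
  case True
  define r where "r = Re \<eta>"
  have er: "\<eta> = complex_of_real r" using True by (simp add: r_def complex_eq_iff)
  have "\<bar>r\<bar> = 1" using eta er by simp
  then have "r^2 = 1" unfolding abs_square_eq_1[symmetric] .
  then have r2: "r * r = 1" by (simp add: power2_eq_square)
  define a where "a = D * \<zeta> * \<eta>"
  have a0: "a \<noteq> 0" using D0 z1 eta by (auto simp: a_def)
  obtain e where e: "\<bar>e\<bar> = 1" and ineq: "2 * Re (a * Complex 1 e) < 4 * \<bar>Im (a * Complex 1 e)\<bar>"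
    using choose_dir[OF a0] by blast
  define d where "d = Complex 1 e"
  define \<delta> where "\<delta> = 4 * \<bar>Im (a * d)\<bar> - 2 * Re (a * d)"
  have \<delta>0: "\<delta> > 0" using ineq by (simp add: \<delta>_def d_def)
  define \<epsilon> where "\<epsilon> = \<delta> / 6"
  have eps0: "\<epsilon> > 0" using \<delta>0 by (simp add: \<epsilon>_def)
  have ev: "eventually (\<lambda>s. cmod (\<omega> (ppt \<zeta> e s) - \<eta> + D * \<zeta> * Complex 1 e * complex_of_real s) \<le> \<epsilon> * s) (at_right 0)"
    by (rule expansion[OF hol z1 e lim dlim eps0])
  have "eventually (\<lambda>s. 1 - (cmod (\<omega> (ppt \<zeta> e s)))^2 \<le> 4 * \<bar>Im (\<omega> (ppt \<zeta> e s))\<bar>) (at_right 0)"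
    using ev ev_small
  proof eventually_elim
    case (elim s)
    define P where "P = Im (a * d)"
    define Q where "Q = Re (a * d)"
    have C0: "\<epsilon> * s * 6 = 4 * (s * \<bar>P\<bar>) - 2 * (s * Q)"
      unfolding \<epsilon>_def \<delta>_def P_def[symmetric] Q_def[symmetric] by (simp add: field_simps)
    have ad: "a * d = (D * \<zeta>) * \<eta> * d" by (simp add: a_def)
    have C: "\<epsilon> * s * 6 = 4 * (s * \<bar>Im ((D * \<zeta>) * \<eta> * d)\<bar>) - 2 * (s * Re ((D * \<zeta>) * \<eta> * d))"
      using C0 unfolding P_def Q_def ad .
    show ?case
      by (rule alg_step[OF er r2 refl _ _ C]) (use elim in \<open>simp_all add: d_def\<close>)
  qed
  then show ?thesis using e by blast
qed

lemma small_root: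
  fixes x :: real
  assumes "0 \<le> x" "x \<le> 1 - x^2"
  shows "x \<le> 2/3"
proof (rule ccontr)
  assume "\<not> x \<le> 2/3"
  then have x: "x > 2/3" by simp
  have "(2/3) * (2/3) < x * x" using x by (intro mult_strict_mono) auto
  then show False using assms(2) x by (simp add: power2_eq_square)
qed

lemma moeb_ident:
  fixes a b :: complex
  shows "(cmod (1 - cnj b * a))^2 - (cmod (a - b))^2 = (1 - (cmod a)^2) * (1 - (cmod b)^2)"
proof -
  have e1: "(cmod (1 - cnj b * a))^2 = (1 - (Re b * Re a + Im b * Im a))^2 + (Re b * Im a - Im b * Re a)^2"
    unfolding cmod_power2 by (simp add: power2_eq_square algebra_simps)
  have e2: "(cmod (a - b))^2 = (Re a - Re b)^2 + (Im a - Im b)^2"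
    unfolding cmod_power2 by simp
  show ?thesis unfolding e1 e2 cmod_power2 by (simp add: power2_eq_square algebra_simps)
qed

lemma ph_bound:
  fixes a b :: complex
  assumes a: "cmod a \<le> 2/3" and b: "cmod b < 1"
    and m: "cmod ((a - b) / (1 - cnj b * a)) \<le> 4/7"
  shows "(cmod b)^2 \<le> 136/147"
proof -
  have "cmod (cnj b * a) \<le> cmod a" using b by (simp add: norm_mult mult_left_le_one_le)
  then have lb: "cmod (1 - cnj b * a) \<ge> 1/3"
    using a norm_triangle_ineq2[of 1 "cnj b * a"] by simp
  then have pos: "cmod (1 - cnj b * a) > 0" by linarith
  have "cmod (a - b) \<le> 4/7 * cmod (1 - cnj b * a)"
    using m pos by (simp add: norm_divide divide_le_eq)
  then have "(cmod (a - b))^2 \<le> (4/7 * cmod (1 - cnj b * a))^2"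
    by (intro power_mono) auto
  also have "\<dots> = 16/49 * (cmod (1 - cnj b * a))^2" by (simp add: power_mult_distrib power2_eq_square)
  finally have sq: "(cmod (a - b))^2 \<le> 16/49 * (cmod (1 - cnj b * a))^2" .
  have "(1 - (cmod a)^2) * (1 - (cmod b)^2) \<ge> (33/49) * (cmod (1 - cnj b * a))^2"
    using moeb_ident[of b a] sq by linarith
  moreover have "(cmod (1 - cnj b * a))^2 \<ge> (1/3)^2" using lb by (intro power_mono) auto
  moreover have "((1::real)/3)^2 = 1/9" by (simp add: power2_eq_square)
  ultimately have h: "(1 - (cmod a)^2) * (1 - (cmod b)^2) \<ge> 11/147" by linarith
  have "0 \<le> 1 - (cmod b)^2" using b by (simp add: abs_square_le_1)
  moreover have "1 - (cmod a)^2 \<le> 1" by simp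
  ultimately have "(1 - (cmod a)^2) * (1 - (cmod b)^2) \<le> 1 - (cmod b)^2"
    using mult_right_mono[of "1 - (cmod a)^2" 1 "1 - (cmod b)^2"] by simp
  then show ?thesis using h by simp
qed

theorem theorem3p8:
  fixes \<phi> \<omega> :: "complex \<Rightarrow> complex" and \<zeta> :: complex
  assumes "schwarz_type \<phi>" and "schwarz_type \<omega>"
    and "cmod \<zeta> = 1"
    and "\<exists>\<eta>. cmod \<eta> = 1 \<and> radial_limit \<phi> \<zeta> \<eta>"
    and "\<forall>f\<in>class_P. T_op (ell \<circ> \<omega>) \<phi> f \<in> class_P"
  shows "\<not> (\<exists>D. D \<noteq> 0 \<and> has_angular_derivative \<omega> \<zeta> D)"
proof
  assume "\<exists>D. D \<noteq> 0 \<and> has_angular_derivative \<omega> \<zeta> D"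
  then obtain D \<eta> where D0: "D \<noteq> 0" and eta: "cmod \<eta> = 1" and lim: "nontangential_limit \<omega> \<zeta> \<eta>"
    and dlim: "nontangential_limit (deriv \<omega>) \<zeta> D"
    unfolding has_angular_derivative_def by blast
  obtain \<eta>\<phi> where etaphi: "cmod \<eta>\<phi> = 1" and rad: "radial_limit \<phi> \<zeta> \<eta>\<phi>" using assms(4) by blast
  have z1: "cmod \<zeta> = 1" by (rule assms(3))
  have holw: "\<omega> holomorphic_on unit_disk" using assms(2) by (simp add: schwarz_type_def)
  have holp: "\<phi> holomorphic_on ball 0 1" using assms(1) by (simp add: schwarz_type_def unit_disk_def)
  have imgp: "\<phi> ` ball 0 1 \<subseteq> ball 0 1" using assms(1) by (simp add: schwarz_type_def unit_disk_def)
  have imgw: "\<omega> ` unit_disk \<subseteq> unit_disk" using assms(2) by (simp add: schwarz_type_def)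
  obtain e where e: "\<bar>e\<bar> = 1"
    and evB: "eventually (\<lambda>s. 1 - (cmod (\<omega> (ppt \<zeta> e s)))^2 \<le> 4 * \<bar>Im (\<omega> (ppt \<zeta> e s))\<bar>) (at_right 0)"
    using keyB[OF holw z1 eta lim dlim D0] by blast
  have "((\<lambda>s. \<phi> (complex_of_real (1-s) * \<zeta>)) \<longlongrightarrow> \<eta>\<phi>) (at_right 0)"
    by (rule radial_comp[OF rad])
  then have "((\<lambda>s. (cmod (\<phi> (complex_of_real (1-s) * \<zeta>)))^2) \<longlongrightarrow> (cmod \<eta>\<phi>)^2) (at_right 0)"
    by (intro tendsto_intros)
  then have "((\<lambda>s. (cmod (\<phi> (complex_of_real (1-s) * \<zeta>)))^2) \<longlongrightarrow> 1) (at_right 0)"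
    using etaphi by simp
  then have evR: "eventually (\<lambda>s. (cmod (\<phi> (complex_of_real (1-s) * \<zeta>)))^2 > 136/147) (at_right 0)"
    by (rule order_tendstoD) simp
  have "eventually (\<lambda>s. False) (at_right (0::real))"
    using evB evR ev_small
  proof eventually_elim
    case (elim s)
    define P where "P = ppt \<zeta> e s"
    define R where "R = complex_of_real (1-s) * \<zeta>"
    have Pd: "P \<in> unit_disk" using ppt_facts(1)[OF z1 e] elim stolz_sub unfolding P_def by blast
    have "cmod R = cmod (complex_of_real (1-s)) * cmod \<zeta>" by (simp only: R_def norm_mult)
    also have "\<dots> = \<bar>1 - s\<bar>" using z1 by (simp only: norm_of_real mult_1_right)
    finally have Rn: "cmod R < 1" using elim by simp
    have Pn: "cmod P < 1" using Pd by (simp add: unit_disk_def)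
    have wP: "cmod (\<omega> P) < 1" using imgw Pd by (auto simp: unit_disk_def image_subset_iff)
    have pw: "4 * \<bar>Im (\<omega> P)\<bar> * cmod (\<phi> P) \<le> (1 - (cmod (\<omega> P))^2) * (1 - (cmod (\<phi> P))^2)"
      by (rule pointwise[OF assms(1) assms(2) assms(5) Pd])
    have A: "1 - (cmod (\<omega> P))^2 \<le> 4 * \<bar>Im (\<omega> P)\<bar>" using elim(1) by (simp add: P_def)
    have Apos: "1 - (cmod (\<omega> P))^2 > 0" using wP by (simp add: abs_square_less_1)
    have "(1 - (cmod (\<omega> P))^2) * cmod (\<phi> P) \<le> 4 * \<bar>Im (\<omega> P)\<bar> * cmod (\<phi> P)"
      using A by (intro mult_right_mono) auto
    then have "(1 - (cmod (\<omega> P))^2) * cmod (\<phi> P) \<le> (1 - (cmod (\<omega> P))^2) * (1 - (cmod (\<phi> P))^2)"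
      using pw by linarith
    then have "cmod (\<phi> P) \<le> 1 - (cmod (\<phi> P))^2" using Apos by simp
    then have p23: "cmod (\<phi> P) \<le> 2/3" by (intro small_root) auto
    have "cmod (Moebius_function 0 (\<phi> R) (\<phi> P)) \<le> cmod (Moebius_function 0 R P)"
      by (rule schwarz_pick[OF holp imgp Pn Rn])
    also have "\<dots> \<le> 4/7" unfolding P_def R_def using ppt_hyp[OF z1 e] elim by simp
    finally have "cmod ((\<phi> P - \<phi> R) / (1 - cnj (\<phi> R) * \<phi> P)) \<le> 4/7"
      by (simp add: Moebius_function_simple)
    moreover have "cmod (\<phi> R) < 1" using imgp Rn by (auto simp: image_subset_iff)
    ultimately have "(cmod (\<phi> R))^2 \<le> 136/147" using ph_bound p23 by blast
    then show False using elim(2) by (simp add: R_def)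
  qed
  then show False by (simp add: eventually_False)
qed

end
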